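(* Let $\phi,\varphi\in\mathrm{Stab}_N(\mathbf{Q}_2)$, $x\in\mathbf{Q}_2$ and $v,w\in V$. Then: (1) if $vx=wx$, then $\log_2((\varphi^{-1}v\varphi)'(\varphi^{-1}x))-\log_2(v'(x))=\log_2((\varphi^{-1}w\varphi)'(\varphi^{-1}x))-\log_2(w'(x))$; (2) for $y\in\mathbf{Q}_2$ and $u\in V$ with $u0=y$, the quantity $\gamma_\varphi(y):=\log_2((\varphi^{-1}u\varphi)'(\varphi^{-1}0))-\log_2(u'(0))$ does not depend on the choice of $u$, hence defines a map $\gamma_\varphi:\mathbf{Q}_2\to\mathbf Z$; (3) $\gamma_\varphi(vx)-\gamma_\varphi(x)=\log_2((\varphi^{-1}v\varphi)'(\varphi^{-1}x))-\log_2(v'(x))$; (4) $\gamma_{\phi\varphi}=\gamma_\phi+\gamma_\varphi^\phi-\gamma_\varphi(\phi^{-1}(0))$, where $\gamma_\varphi^\phi(y)=\gamma_\varphi(\phi^{-1}y)$.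
   Context: Cantor space $\mathfrak C=\{0,1\}^{\mathbf N}$; $C_m=\{m\cdot x\}$. Thompson's group $V$: homeomorphisms $v$ with $v(m_kx)=m'_kx$ for partitions $\mathfrak C=\bigsqcup C_{m_k}=\bigsqcup C_{m'_k}$; slope $v'(x)=2^{|m_k|-|m'_k|}$ on $C_{m_k}$. $\mathbf{Q}_2\subset\mathfrak C$: eventually-zero sequences; $0$ denotes the zero sequence; $V$ acts transitively on $\mathbf{Q}_2$. $\mathrm{Stab}_N(\mathbf{Q}_2)=\{\varphi\in\mathrm{Homeo}(\mathfrak C):\varphi V\varphi^{-1}=V,\ \varphi(\mathbf{Q}_2)=\mathbf{Q}_2\}$. *)

theory Defs
  imports "HOL-Analysis.Analysis"
begin

type_synonym cantor = "nat \<Rightarrow> bool"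

definition cantor_top :: "cantor topology" where
  "cantor_top = product_topology (\<lambda>_. discrete_topology (UNIV :: bool set)) UNIV"

definition conc :: "bool list \<Rightarrow> cantor \<Rightarrow> cantor" where
  "conc m x = (\<lambda>n. if n < length m then m ! n else x (n - length m))"

definition cyl :: "bool list \<Rightarrow> cantor set" where
  "cyl m = range (conc m)"

definition is_partition :: "bool list list \<Rightarrow> bool" where
  "is_partition ms \<longleftrightarrow> (\<forall>x. \<exists>!k. k < length ms \<and> x \<in> cyl (ms ! k))"

definition V_data :: "(cantor \<Rightarrow> cantor) \<Rightarrow> bool list list \<Rightarrow> bool list list \<Rightarrow> bool" where
  "V_data v ms ms' \<longleftrightarrow> length ms = length ms' \<and> is_partition ms \<and> is_partition ms' \<and>
     (\<forall>k < length ms. \<forall>x. v (conc (ms ! k) x) = conc (ms' ! k) x)"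

definition thompsonV :: "(cantor \<Rightarrow> cantor) set" where
  "thompsonV = {v. \<exists>ms ms'. V_data v ms ms'}"

definition slope :: "(cantor \<Rightarrow> cantor) \<Rightarrow> cantor \<Rightarrow> real" where
  "slope v x = (THE s. \<exists>ms ms' k. V_data v ms ms' \<and> k < length ms \<and> x \<in> cyl (ms ! k) \<and>
      s = 2 powr (real (length (ms ! k)) - real (length (ms' ! k))))"

definition Q2 :: "cantor set" where
  "Q2 = {x. \<exists>N. \<forall>n\<ge>N. x n = False}"

definition zero_seq :: cantor where
  "zero_seq = (\<lambda>_. False)"

definition StabN :: "(cantor \<Rightarrow> cantor) set" where
  "StabN = {\<phi>. homeomorphic_map cantor_top cantor_top \<phi> \<and>
                (\<lambda>v. \<phi> \<circ> v \<circ> inv \<phi>) ` thompsonV = thompsonV \<and> \<phi> ` Q2 = Q2}"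

definition gamma :: "(cantor \<Rightarrow> cantor) \<Rightarrow> cantor \<Rightarrow> real" where
  "gamma \<phi> y = (let u = (SOME u. u \<in> thompsonV \<and> u zero_seq = y) in
     log 2 (slope (inv \<phi> \<circ> u \<circ> \<phi>) (inv \<phi> zero_seq)) - log 2 (slope u zero_seq))"

end

theory Submission
  imports Defs
begin


definition pref :: "cantor \<Rightarrow> nat \<Rightarrow> bool list" where
  "pref x L = map x [0..<L]"

definition shft :: "nat \<Rightarrow> cantor \<Rightarrow> cantor" where
  "shft L x = (\<lambda>n. x (n + L))"

definition loc :: "(cantor \<Rightarrow> cantor) \<Rightarrow> bool list \<Rightarrow> bool list \<Rightarrow> bool" where
  "loc v p p' \<longleftrightarrow> (\<forall>y. v (conc p y) = conc p' y)"

lemma length_pref[simp]: "length (pref x L) = L"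
  by (simp add: pref_def)

lemma nth_pref[simp]: "i < L \<Longrightarrow> pref x L ! i = x i"
  by (simp add: pref_def)

lemma cyl_iff: "y \<in> cyl p \<longleftrightarrow> (\<forall>i<length p. y i = p ! i)"
proof
  assume "y \<in> cyl p" then show "\<forall>i<length p. y i = p ! i"
    by (auto simp: cyl_def conc_def)
next
  assume h: "\<forall>i<length p. y i = p ! i"
  have "y = conc p (shft (length p) y)"
    using h by (auto simp: conc_def shft_def fun_eq_iff)
  then show "y \<in> cyl p" by (auto simp: cyl_def)
qed

lemma cyl_pref_iff: "y \<in> cyl p \<longleftrightarrow> pref y (length p) = p"
  by (auto simp: cyl_iff list_eq_iff_nth_eq)

lemma in_cyl_pref[simp]: "x \<in> cyl (pref x L)"
  by (simp add: cyl_iff)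

lemma conc_pref_shft: "conc (pref x L) (shft L x) = x"
  by (auto simp: conc_def shft_def fun_eq_iff)

lemma conc_append: "conc (a @ b) y = conc a (conc b y)"
  by (auto simp: conc_def fun_eq_iff nth_append)

lemma conc_Nil[simp]: "conc [] y = y"
  by (simp add: conc_def)

lemma conc_inj: "conc p y = conc p y' \<Longrightarrow> y = y'"
proof -
  assume h: "conc p y = conc p y'"
  show "y = y'"
  proof
    fix n
    have "conc p y (n + length p) = conc p y' (n + length p)" using h by simp
    then show "y n = y' n" by (simp add: conc_def)
  qed
qed

lemma conc_in_cyl[simp]: "conc p y \<in> cyl p"
  by (auto simp: cyl_def)

lemma shft_conc[simp]: "shft (length p) (conc p y) = y"
  by (simp add: shft_def conc_def fun_eq_iff)

lemma conc_eq_all: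
  assumes "\<And>y. conc a y = conc b y" shows "a = b"
proof -
  have l: "length a = length b"
  proof (rule ccontr)
    assume ne: "length a \<noteq> length b"
    show False
    proof (cases "length a < length b")
      case True
      have "conc a (\<lambda>_. True) (length a) = conc b (\<lambda>_. True) (length a)"
           "conc a (\<lambda>_. False) (length a) = conc b (\<lambda>_. False) (length a)"
        using assms by auto
      then show False using True by (simp add: conc_def)
    next
      case False
      then have "length b < length a" using ne by simp
      have "conc a (\<lambda>_. True) (length b) = conc b (\<lambda>_. True) (length b)"
           "conc a (\<lambda>_. False) (length b) = conc b (\<lambda>_. False) (length b)"
        using assms by auto
      then show False using \<open>length b < length a\<close> by (simp add: conc_def)
    qed
  qed
  show ?thesis
  proof (rule nth_equalityI[OF l])
    fix i assume "i < length a"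
    then have "conc a (\<lambda>_. True) i = conc b (\<lambda>_. True) i" using assms by simp
    then show "a ! i = b ! i" using \<open>i < length a\<close> l by (simp add: conc_def)
  qed
qed

lemma loc_ext: "loc v p p' \<Longrightarrow> loc v (p @ r) (p' @ r)"
  by (simp add: loc_def conc_append)

lemma loc_image: "loc v p p' \<Longrightarrow> x \<in> cyl p \<Longrightarrow> v x \<in> cyl p'"
  unfolding loc_def cyl_def by auto

lemma cyl_prefix_pref: "x \<in> cyl p \<Longrightarrow> p = pref x (length p)"
  by (simp add: cyl_pref_iff)

lemma pref_add: "pref x (L + j) = pref x L @ pref (shft L x) j"
  by (auto simp: pref_def shft_def list_eq_iff_nth_eq nth_append)

lemma pref_mono_cyl: "L \<le> M \<Longrightarrow> cyl (pref x M) \<subseteq> cyl (pref x L)"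
  by (auto simp: cyl_iff)

lemma prefix_same_point:
  assumes "x \<in> cyl p" "x \<in> cyl q" "length p \<le> length q"
  shows "q = p @ drop (length p) q"
proof -
  have "p = pref x (length p)" "q = pref x (length q)" using assms cyl_prefix_pref by auto
  moreover have "pref x (length q) = pref x (length p) @ pref (shft (length p) x) (length q - length p)"
    using assms(3) pref_add[of x "length p" "length q - length p"] by simp
  ultimately show ?thesis by (metis append_eq_conv_conj)
qed



lemma part_ex: "is_partition ms \<Longrightarrow> \<exists>k. k < length ms \<and> x \<in> cyl (ms!k)"
  unfolding is_partition_def by blast

lemma part_uniq: "is_partition ms \<Longrightarrow> i < length ms \<Longrightarrow> x \<in> cyl (ms!i) \<Longrightarrow>
   j < length ms \<Longrightarrow> x \<in> cyl (ms!j) \<Longrightarrow> i = j"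
  unfolding is_partition_def by blast

lemma V_data_ex: "V_data v ms ms' \<Longrightarrow> \<exists>k. k < length ms \<and> x \<in> cyl (ms!k)"
  unfolding V_data_def using part_ex by blast

lemma V_data_ex': "V_data v ms ms' \<Longrightarrow> \<exists>k. k < length ms' \<and> x \<in> cyl (ms'!k)"
  unfolding V_data_def using part_ex by blast

lemma V_data_loc: "V_data v ms ms' \<Longrightarrow> k < length ms \<Longrightarrow> loc v (ms!k) (ms'!k)"
  by (simp add: V_data_def loc_def)

lemma V_local:
  assumes "v \<in> thompsonV" shows "\<exists>p p'. x \<in> cyl p \<and> loc v p p'"
proof -
  obtain ms ms' where d: "V_data v ms ms'" using assms by (auto simp: thompsonV_def)
  then obtain k where "k < length ms" "x \<in> cyl (ms!k)"
    using V_data_ex by blast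
  then show ?thesis using V_data_loc[OF d] by blast
qed

lemma loc_same_diff:
  assumes "loc v p p'" "loc v q q'" "x \<in> cyl p" "x \<in> cyl q"
  shows "int (length p) - int (length p') = int (length q) - int (length q')"
proof -
  have gen: "int (length p) - int (length p') = int (length q) - int (length q')"
    if "loc v p p'" "loc v q q'" "x \<in> cyl p" "x \<in> cyl q" "length p \<le> length q" for p p' q q'
  proof -
    define r where "r = drop (length p) q"
    have q: "q = p @ r" using prefix_same_point[OF that(3,4,5)] by (simp add: r_def)
    have "loc v q (p' @ r)" using loc_ext[OF that(1)] q by simp
    then have "\<And>y. conc q' y = conc (p' @ r) y" using that(2) by (simp add: loc_def)
    then have "q' = p' @ r" by (rule conc_eq_all)
    then show ?thesis using q by simp
  qed
  show ?thesis
  proof (cases "length p \<le> length q")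
    case True then show ?thesis using gen assms by blast
  next
    case False then show ?thesis using gen[OF assms(2,1,4,3)] by simp
  qed
qed

abbreviation lsr :: "(cantor \<Rightarrow> cantor) \<Rightarrow> cantor \<Rightarrow> real" where
  "lsr v x \<equiv> log 2 (slope v x)"

lemma slope_loc:
  assumes v: "v \<in> thompsonV" and x: "x \<in> cyl p" and l: "loc v p p'"
  shows "slope v x = 2 powr (real (length p) - real (length p'))"
proof -
  obtain ms ms' where d: "V_data v ms ms'" using v by (auto simp: thompsonV_def)
  then obtain k where k: "k < length ms" "x \<in> cyl (ms!k)"
    using V_data_ex by blast
  have eq: "real (length (ms!k)) - real (length (ms'!k)) = real (length p) - real (length p')"
    using loc_same_diff[OF V_data_loc[OF d k(1)] l k(2) x] by linarith
  show ?thesis unfolding slope_def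
  proof (rule the_equality)
    show "\<exists>ms ms' k. V_data v ms ms' \<and> k < length ms \<and> x \<in> cyl (ms ! k) \<and>
       2 powr (real (length p) - real (length p')) = 2 powr (real (length (ms ! k)) - real (length (ms' ! k)))"
      using d k eq by metis
  next
    fix s assume "\<exists>ms ms' k. V_data v ms ms' \<and> k < length ms \<and> x \<in> cyl (ms ! k) \<and>
       s = 2 powr (real (length (ms ! k)) - real (length (ms' ! k)))"
    then obtain ms2 ms2' k2 where h: "V_data v ms2 ms2'" "k2 < length ms2" "x \<in> cyl (ms2 ! k2)"
       "s = 2 powr (real (length (ms2 ! k2)) - real (length (ms2' ! k2)))" by blast
    have "real (length (ms2!k2)) - real (length (ms2'!k2)) = real (length p) - real (length p')"
      using loc_same_diff[OF V_data_loc[OF h(1,2)] l h(3) x] by linarith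
    then show "s = 2 powr (real (length p) - real (length p'))" using h(4) by simp
  qed
qed

lemma lsr_loc:
  assumes "v \<in> thompsonV" "x \<in> cyl p" "loc v p p'"
  shows "lsr v x = real (length p) - real (length p')"
  using slope_loc[OF assms] by simp

lemma loc_pref:
  assumes "v \<in> thompsonV"
  shows "\<exists>L0. \<forall>L\<ge>L0. \<exists>p'. loc v (pref x L) p'"
proof -
  obtain p p' where h: "x \<in> cyl p" "loc v p p'" using V_local[OF assms] by blast
  have "\<exists>p'. loc v (pref x L) p'" if "L \<ge> length p" for L
  proof -
    have "pref x L = p @ pref (shft (length p) x) (L - length p)"
      using pref_add[of x "length p" "L - length p"] that cyl_prefix_pref[OF h(1)] by simp
    then show ?thesis using loc_ext[OF h(2)] by metis
  qed
  then show ?thesis by blast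
qed

lemma loc_pref_image:
  assumes "loc v (pref x L) p'" shows "p' = pref (v x) (length p')"
  using loc_image[OF assms in_cyl_pref] cyl_prefix_pref by blast

lemma lsr_int: "v \<in> thompsonV \<Longrightarrow> lsr v x \<in> \<int>"
  using V_local[of v x] lsr_loc[of v x] by (metis Ints_diff Ints_of_nat)

definition unif :: "(cantor \<Rightarrow> cantor) \<Rightarrow> nat \<Rightarrow> bool" where
  "unif v N \<longleftrightarrow> (\<forall>p. length p = N \<longrightarrow> (\<exists>p'. loc v p p'))"

lemma V_bij: assumes "v \<in> thompsonV" shows "bij v"
proof -
  obtain ms ms' where d: "V_data v ms ms'" using assms by (auto simp: thompsonV_def)
  have surj: "surj v"
  proof -
    have "y \<in> range v" for y
    proof -
      obtain k where k: "k < length ms'" "y \<in> cyl (ms'!k)" using d V_data_ex' by blast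
      then obtain t where "y = conc (ms'!k) t" by (auto simp: cyl_def)
      moreover have "k < length ms" using d k by (simp add: V_data_def)
      ultimately have "y = v (conc (ms!k) t)" using d by (simp add: V_data_def)
      then show ?thesis by blast
    qed
    then show ?thesis by blast
  qed
  have inj: "inj v"
  proof
    fix a b assume e: "v a = v b"
    obtain i where i: "i < length ms" "a \<in> cyl (ms!i)" using d V_data_ex by blast
    obtain j where j: "j < length ms" "b \<in> cyl (ms!j)" using d V_data_ex by blast
    obtain s t where st: "a = conc (ms!i) s" "b = conc (ms!j) t" using i j by (auto simp: cyl_def)
    have va: "v a = conc (ms'!i) s" "v b = conc (ms'!j) t" using d i j st by (auto simp: V_data_def)
    have part: "is_partition ms'" "length ms = length ms'" using d by (auto simp: V_data_def)
    have "v a \<in> cyl (ms'!i)" "v a \<in> cyl (ms'!j)" using va e conc_in_cyl by metis+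
    then have ij: "i = j" using part i j part_uniq by (metis)
    then have "s = t" using va e conc_inj by metis
    then show "a = b" using st ij by simp
  qed
  show ?thesis using inj surj by (simp add: bij_def)
qed

lemma V_inv: assumes "v \<in> thompsonV" shows "inv v \<in> thompsonV"
proof -
  obtain ms ms' where d: "V_data v ms ms'" using assms by (auto simp: thompsonV_def)
  have b: "bij v" using V_bij[OF assms] .
  have "V_data (inv v) ms' ms"
    using d unfolding V_data_def
    by (metis b bij_inv_eq_iff)
  then show ?thesis by (auto simp: thompsonV_def)
qed

lemma V_unif: assumes "v \<in> thompsonV" shows "\<exists>N. unif v N"
proof -
  obtain ms ms' where d: "V_data v ms ms'" using assms by (auto simp: thompsonV_def)
  define N where "N = Max (length ` set ms)"
  have "\<exists>p'. loc v p p'" if "length p = N" for p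
  proof -
    obtain k where k: "k < length ms" "conc p zero_seq \<in> cyl (ms!k)"
      using d V_data_ex by blast
    have "length (ms!k) \<le> N" unfolding N_def using k(1) by (simp add: Max_ge)
    then have "length (ms!k) \<le> length p" using that by simp
    then have "p = ms!k @ drop (length (ms!k)) p"
      using prefix_same_point[OF k(2), of p] by simp
    then show ?thesis using loc_ext[OF V_data_loc[OF d k(1)]] by metis
  qed
  then show ?thesis by (auto simp: unif_def)
qed

lemma unif_V:
  assumes b: "bij v" and u: "unif v N" shows "v \<in> thompsonV"
proof -
  define ms where "ms = List.n_lists N [False, True]"
  define ms' where "ms' = map (\<lambda>p. SOME p'. loc v p p') ms"
  have setms: "set ms = {p. length p = N}" by (auto simp: ms_def set_n_lists)
  have dist: "distinct ms" unfolding ms_def by (rule distinct_n_lists) simp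
  have locs: "loc v (ms!k) (ms'!k)" if "k < length ms" for k
  proof -
    have "length (ms!k) = N" using that setms nth_mem by blast
    then have "\<exists>p'. loc v (ms!k) p'" using u by (simp add: unif_def)
    then show ?thesis using that unfolding ms'_def by (simp add: someI_ex)
  qed
  have mem: "x \<in> cyl (ms!k) \<longleftrightarrow> ms!k = pref x N" if "k < length ms" for k x
  proof -
    have "length (ms!k) = N" using that setms nth_mem by blast
    then show ?thesis using cyl_pref_iff by metis
  qed
  have p1: "is_partition ms"
    unfolding is_partition_def
  proof
    fix x
    have "pref x N \<in> set ms" using setms by simp
    then obtain k where k: "k < length ms" "ms!k = pref x N" unfolding in_set_conv_nth by blast
    show "\<exists>!k. k < length ms \<and> x \<in> cyl (ms ! k)"
    proof (rule ex1I[of _ k])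
      show "k < length ms \<and> x \<in> cyl (ms ! k)" using k mem by blast
    next
      fix j assume jj: "j < length ms \<and> x \<in> cyl (ms ! j)"
      then have "ms!j = ms!k" using k mem[of j x] by simp
      then show "j = k" using nth_eq_iff_index_eq[OF dist] jj k(1) by simp
    qed
  qed
  have p2: "is_partition ms'"
    unfolding is_partition_def
  proof
    fix x
    obtain a where a: "x = v a" using b unfolding bij_def surj_def by blast
    have "pref a N \<in> set ms" using setms by simp
    then obtain k where k: "k < length ms" "ms!k = pref a N" unfolding in_set_conv_nth by blast
    have ha: "a = conc (ms!k) (shft N a)" using conc_pref_shft[of a N] k(2) by simp
    have "v (conc (ms!k) (shft N a)) = conc (ms'!k) (shft N a)" using locs[OF k(1)] unfolding loc_def by blast
    moreover have "v a = v (conc (ms!k) (shft N a))" using ha by (rule arg_cong)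
    ultimately have "v a = conc (ms'!k) (shft N a)" by simp
    then have xk: "x = conc (ms'!k) (shft N a)" using a by simp
    show "\<exists>!k. k < length ms' \<and> x \<in> cyl (ms' ! k)"
    proof (rule ex1I[of _ k])
      show "k < length ms' \<and> x \<in> cyl (ms' ! k)" using k xk ms'_def by simp
    next
      fix j assume j: "j < length ms' \<and> x \<in> cyl (ms' ! j)"
      then obtain t where t: "x = conc (ms'!j) t" by (auto simp: cyl_def)
      have jl: "j < length ms" using j ms'_def by simp
      have "v (conc (ms!j) t) = x" using t locs[OF jl] by (simp add: loc_def)
      then have "v (conc (ms!j) t) = v a" using a by simp
      then have "conc (ms!j) t = a" by (rule injD[OF bij_is_inj[OF b]])
      then have "a \<in> cyl (ms!j)" using conc_in_cyl by metis
      then have "ms!j = ms!k" using mem[OF jl] k by simp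
      then show "j = k" using nth_eq_iff_index_eq[OF dist] jl k(1) by simp
    qed
  qed
  have len: "length ms = length ms'" unfolding ms'_def by simp
  have "\<forall>k < length ms. \<forall>x. v (conc (ms ! k) x) = conc (ms' ! k) x"
    using locs unfolding loc_def by blast
  then have "V_data v ms ms'"
    unfolding V_data_def using p1 p2 len by blast
  then show ?thesis by (auto simp: thompsonV_def)
qed

lemma unif_comp:
  assumes "unif v N" "unif w M" shows "unif (w \<circ> v) (N + M)"
  unfolding unif_def
proof (intro allI impI)
  fix p :: "bool list" assume lp: "length p = N + M"
  define a where "a = take N p"
  define b where "b = drop N p"
  have p: "p = a @ b" and la: "length a = N" and lb: "length b = M"
    using lp by (auto simp: a_def b_def)
  obtain a' where a': "loc v a a'" using assms(1) la by (auto simp: unif_def)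
  define c where "c = take M (a' @ b)"
  define d where "d = drop M (a' @ b)"
  have cd: "a' @ b = c @ d" unfolding c_def d_def by (rule append_take_drop_id[symmetric])
  have lc: "length c = M" using lb by (auto simp: c_def)
  obtain c' where c': "loc w c c'" using assms(2) lc by (auto simp: unif_def)
  have "loc (w \<circ> v) p (c' @ d)"
    unfolding loc_def
  proof
    fix y
    have "v (conc p y) = conc (a' @ b) y" using a' p by (simp add: loc_def conc_append)
    then have "v (conc p y) = conc (c @ d) y" using cd by simp
    then show "(w \<circ> v) (conc p y) = conc (c' @ d) y" using c' by (simp add: loc_def conc_append)
  qed
  then show "\<exists>p'. loc (w \<circ> v) p p'" by blast
qed

lemma V_comp: "v \<in> thompsonV \<Longrightarrow> w \<in> thompsonV \<Longrightarrow> w \<circ> v \<in> thompsonV"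
  by (meson V_bij V_unif bij_comp unif_comp unif_V)

lemma V_id: "id \<in> thompsonV"
proof (rule unif_V[of id 0])
  show "unif id 0" unfolding unif_def loc_def by (metis conc_Nil id_apply)
qed simp



lemma loc_id: "loc id [] []" by (simp add: loc_def)

lemma lsr_id: "lsr id x = 0"
  using lsr_loc[OF V_id _ loc_id, of x] by (simp add: cyl_iff)

lemma lsr_comp:
  assumes g: "g \<in> thompsonV" and h: "h \<in> thompsonV"
  shows "lsr (g \<circ> h) x = lsr g (h x) + lsr h x"
proof -
  obtain L0 where hL0: "\<forall>L\<ge>L0. \<exists>p'. loc h (pref x L) p'" using loc_pref[OF h] by blast
  obtain L1 where hL1: "\<forall>L\<ge>L1. \<exists>p'. loc g (pref (h x) L) p'" using loc_pref[OF g] by blast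
  obtain p0 where p0: "loc h (pref x L0) p0" using hL0 by blast
  define r where "r = pref (shft L0 x) L1"
  have l1: "loc h (pref x (L0 + L1)) (p0 @ r)"
    using loc_ext[OF p0, of r] by (simp add: pref_add r_def)
  have qeq: "p0 @ r = pref (h x) (length (p0 @ r))" by (rule loc_pref_image[OF l1])
  have "length (p0 @ r) \<ge> L1" by (simp add: r_def)
  then obtain q' where q': "loc g (pref (h x) (length (p0 @ r))) q'" using hL1 by blast
  have l2: "loc (g \<circ> h) (pref x (L0 + L1)) q'"
    unfolding loc_def
  proof
    fix y
    have "h (conc (pref x (L0 + L1)) y) = conc (pref (h x) (length (p0 @ r))) y"
      using l1 qeq unfolding loc_def by metis
    then show "(g \<circ> h) (conc (pref x (L0 + L1)) y) = conc q' y" using q' by (simp add: loc_def)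
  qed
  have e1: "lsr (g \<circ> h) x = real (L0 + L1) - real (length q')"
    using lsr_loc[OF V_comp[OF h g] in_cyl_pref l2] by simp
  have e2: "lsr h x = real (L0 + L1) - real (length (p0 @ r))"
    using lsr_loc[OF h in_cyl_pref l1] by simp
  have e3: "lsr g (h x) = real (length (p0 @ r)) - real (length q')"
    using lsr_loc[OF g in_cyl_pref q'] by simp
  show ?thesis using e1 e2 e3 by simp
qed

lemma lsr_inv:
  assumes g: "g \<in> thompsonV" shows "lsr (inv g) (g x) = - lsr g x"
proof -
  have "inv g \<circ> g = id" using V_bij[OF g] by (simp add: bij_is_inj)
  then have "lsr (inv g \<circ> g) x = 0" using lsr_id by simp
  then show ?thesis using lsr_comp[OF V_inv[OF g] g, of x] by simp
qed

lemma zero_conc: "conc (replicate n False) zero_seq = zero_seq"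
  by (auto simp: conc_def zero_seq_def fun_eq_iff)

lemma Q2_conc: "x \<in> Q2 \<longleftrightarrow> (\<exists>p. x = conc p zero_seq)"
proof
  assume "x \<in> Q2"
  then obtain N where N: "\<forall>n\<ge>N. x n = False" by (auto simp: Q2_def)
  have "x = conc (pref x N) zero_seq"
    using N by (auto simp: conc_def zero_seq_def fun_eq_iff)
  then show "\<exists>p. x = conc p zero_seq" by blast
next
  assume "\<exists>p. x = conc p zero_seq"
  then obtain p where "x = conc p zero_seq" by blast
  then show "x \<in> Q2" unfolding Q2_def by (auto simp: conc_def zero_seq_def intro!: exI[of _ "length p"])
qed

lemma conc_Q2: "t \<in> Q2 \<Longrightarrow> conc p t \<in> Q2"
  unfolding Q2_conc by (metis conc_append)

lemma shft_Q2: "x \<in> Q2 \<Longrightarrow> shft L x \<in> Q2"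
proof -
  assume "x \<in> Q2"
  then obtain N where N: "\<forall>n\<ge>N. x n = False" by (auto simp: Q2_def)
  then have "\<forall>n\<ge>N. shft L x n = False" by (simp add: shft_def)
  then show ?thesis by (auto simp: Q2_def)
qed

lemma V_Q2: assumes v: "v \<in> thompsonV" and x: "x \<in> Q2" shows "v x \<in> Q2"
proof -
  obtain p p' where h: "x \<in> cyl p" "loc v p p'" using V_local[OF v] by blast
  have "x = conc p (shft (length p) x)" using h(1) conc_pref_shft cyl_prefix_pref by metis
  then have "v x = conc p' (shft (length p) x)" using h(2) unfolding loc_def by metis
  then show ?thesis using conc_Q2 shft_Q2 x by metis
qed

definition patch :: "bool list \<Rightarrow> (cantor \<Rightarrow> cantor) \<Rightarrow> cantor \<Rightarrow> cantor" where
  "patch p g y = (if y \<in> cyl p then conc p (g (shft (length p) y)) else y)"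

lemma patch_conc[simp]: "patch p g (conc p y) = conc p (g y)"
  by (simp add: patch_def)

lemma patch_out: "y \<notin> cyl p \<Longrightarrow> patch p g y = y"
  by (simp add: patch_def)

lemma patch_comp: "patch p g \<circ> patch p h = patch p (g \<circ> h)"
proof
  fix y show "(patch p g \<circ> patch p h) y = patch p (g \<circ> h) y"
  proof (cases "y \<in> cyl p")
    case True
    then obtain t where "y = conc p t" by (auto simp: cyl_def)
    then show ?thesis by simp
  next
    case False then show ?thesis by (simp add: patch_out)
  qed
qed

lemma patch_id: "patch p id = id"
proof
  fix y show "patch p id y = id y"
  proof (cases "y \<in> cyl p")
    case True
    then obtain t where "y = conc p t" by (auto simp: cyl_def)
    then show ?thesis by simp
  next
    case False then show ?thesis by (simp add: patch_out)
  qed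
qed

lemma patch_bij: assumes "bij g" shows "bij (patch p g)"
proof -
  have "g \<circ> inv g = id" using assms by (meson bij_is_surj surj_iff)
  moreover have "inv g \<circ> g = id" using assms by (meson bij_is_inj inj_iff)
  ultimately have "patch p g \<circ> patch p (inv g) = id" "patch p (inv g) \<circ> patch p g = id"
    by (simp_all add: patch_comp patch_id)
  then show ?thesis using o_bij by blast
qed

lemma loc_patch: "loc g a b \<Longrightarrow> loc (patch p g) (p @ a) (p @ b)"
  by (simp add: loc_def conc_append)

lemma patch_unif: assumes "unif g N" shows "unif (patch p g) (length p + N)"
  unfolding unif_def
proof (intro allI impI)
  fix u :: "bool list" assume lu: "length u = length p + N"
  show "\<exists>p'. loc (patch p g) u p'"
  proof (cases "take (length p) u = p")
    case True
    define b where "b = drop (length p) u"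
    have u: "u = p @ b" using True b_def by (metis append_take_drop_id)
    have "length b = N" using lu b_def by simp
    then obtain b' where "loc g b b'" using assms by (auto simp: unif_def)
    then show ?thesis using loc_patch u by metis
  next
    case False
    have "loc (patch p g) u u"
      unfolding loc_def
    proof
      fix y
      have "conc u y \<notin> cyl p"
      proof
        assume "conc u y \<in> cyl p"
        then have "p = pref (conc u y) (length p)" by (rule cyl_prefix_pref)
        also have "\<dots> = take (length p) u"
          using lu by (auto simp: list_eq_iff_nth_eq conc_def)
        finally show False using False by simp
      qed
      then show "patch p g (conc u y) = conc u y" by (rule patch_out)
    qed
    then show ?thesis by blast
  qed
qed

lemma V_patch: "g \<in> thompsonV \<Longrightarrow> patch p g \<in> thompsonV"
  by (meson V_bij V_unif patch_bij patch_unif unif_V)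

definition sw :: "cantor \<Rightarrow> cantor" where
  "sw y = (\<lambda>n. if n = 0 then \<not> y 0 else y n)"

lemma len1: "length p = Suc 0 \<Longrightarrow> p = [p!0]"
  by (cases p) auto

lemma len2: "length p = 2 \<Longrightarrow> p = [p!0, p!1]"
  by (cases p; cases "tl p") auto

lemma V_sw: "sw \<in> thompsonV"
proof (rule unif_V)
  have "sw \<circ> sw = id" by (auto simp: sw_def fun_eq_iff)
  then show "bij sw" using o_bij by blast
  show "unif sw 1"
    unfolding unif_def
  proof (intro allI impI)
    fix p :: "bool list" assume "length p = 1"
    then have p: "p = [p!0]" using len1 by simp
    have "loc sw [p!0] [\<not> p!0]" by (auto simp: loc_def sw_def conc_def fun_eq_iff)
    then show "\<exists>p'. loc sw p p'" using p by metis
  qed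
qed

lemma sw_zero: "sw zero_seq = conc [True] zero_seq"
  by (auto simp: sw_def conc_def zero_seq_def fun_eq_iff)

definition f0 :: "cantor \<Rightarrow> cantor" where
  "f0 y = (if y 0 then conc [True, True] (shft 1 y)
           else if y 1 then conc [True, False] (shft 2 y) else conc [False] (shft 2 y))"

definition g0 :: "cantor \<Rightarrow> cantor" where
  "g0 y = (if \<not> y 0 then conc [False, False] (shft 1 y)
           else if \<not> y 1 then conc [False, True] (shft 2 y) else conc [True] (shft 2 y))"

lemma nat_cases3: "(n::nat) = 0 \<or> n = 1 \<or> (\<exists>m. n = m + 2)"
  by presburger

lemma f0_g0: "f0 \<circ> g0 = id"
proof
  fix y n
  show "(f0 \<circ> g0) y = id y"
  proof
    fix n
    show "(f0 \<circ> g0) y n = id y n"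
      using nat_cases3[of n] by (auto simp: f0_def g0_def conc_def shft_def)
  qed
qed

lemma g0_f0: "g0 \<circ> f0 = id"
proof
  fix y n
  show "(g0 \<circ> f0) y = id y"
  proof
    fix n
    show "(g0 \<circ> f0) y n = id y n"
      using nat_cases3[of n] by (auto simp: f0_def g0_def conc_def shft_def)
  qed
qed

lemma loc_f0_1: "loc f0 [True, b] [True, True, b]"
  unfolding loc_def
proof
  fix y show "f0 (conc [True, b] y) = conc [True, True, b] y"
  proof
    fix n show "f0 (conc [True, b] y) n = conc [True, True, b] y n"
      by (cases "n = 0"; cases "n = 1"; cases "n = 2") (auto simp: f0_def conc_def shft_def)
  qed
qed

lemma loc_f0_2: "loc f0 [False, True] [True, False]"
  unfolding loc_def
proof
  fix y show "f0 (conc [False, True] y) = conc [True, False] y"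
    unfolding fun_eq_iff using nat_cases3 by (auto simp: f0_def conc_def shft_def)
qed

lemma loc_f0_3: "loc f0 [False, False] [False]"
  unfolding loc_def
proof
  fix y show "f0 (conc [False, False] y) = conc [False] y"
    unfolding fun_eq_iff using nat_cases3 by (auto simp: f0_def conc_def shft_def)
qed

lemma V_f0: "f0 \<in> thompsonV"
proof (rule unif_V)
  show "bij f0" using f0_g0 g0_f0 o_bij by blast
  show "unif f0 2"
    unfolding unif_def
  proof (intro allI impI)
    fix p :: "bool list" assume "length p = 2"
    then have p: "p = [p!0, p!1]" using len2 by simp
    show "\<exists>p'. loc f0 p p'"
    proof (cases "p!0")
      case True then show ?thesis using loc_f0_1 p by metis
    next
      case False
      then show ?thesis using loc_f0_2 loc_f0_3 p by (cases "p!1") metis+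
    qed
  qed
qed

lemma zero_FF: "zero_seq = conc [False, False] zero_seq"
  using zero_conc[of 2] by (simp add: numeral_2_eq_2)

lemma f0_zero: "f0 zero_seq = zero_seq"
  by (metis loc_def loc_f0_3 zero_FF zero_conc[of 1] replicate_Suc replicate_0 One_nat_def)

lemma V_trans: "\<exists>u\<in>thompsonV. u zero_seq = conc p zero_seq"
proof (induction p rule: rev_induct)
  case Nil then show ?case using V_id by (metis conc_Nil id_apply)
next
  case (snoc b p)
  then obtain u where u: "u \<in> thompsonV" "u zero_seq = conc p zero_seq" by blast
  show ?case
  proof (cases b)
    case True
    have "(patch p sw \<circ> u) zero_seq = conc (p @ [b]) zero_seq"
      using u True by (simp add: sw_zero conc_append)
    then show ?thesis using V_comp[OF u(1) V_patch[OF V_sw]] by blast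
  next
    case False
    have "conc (p @ [b]) zero_seq = conc p zero_seq"
      using False zero_conc[of 1] by (simp add: conc_append)
    then show ?thesis using u by metis
  qed
qed

lemma V_trans_Q2: "y \<in> Q2 \<Longrightarrow> \<exists>u\<in>thompsonV. u zero_seq = y"
  using V_trans Q2_conc by metis

lemma fix_elem: assumes "x \<in> Q2" shows "\<exists>f\<in>thompsonV. f x = x \<and> lsr f x = 1"
proof -
  obtain p where p: "x = conc p zero_seq" using assms Q2_conc by blast
  define f where "f = patch p f0"
  have fV: "f \<in> thompsonV" unfolding f_def by (rule V_patch[OF V_f0])
  have fx: "f x = x" unfolding f_def p by (simp add: f0_zero)
  have l: "loc f (p @ [False, False]) (p @ [False])" unfolding f_def by (rule loc_patch[OF loc_f0_3])
  have xc: "x \<in> cyl (p @ [False, False])"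
    unfolding p by (metis conc_append zero_FF conc_in_cyl)
  have "lsr f x = 1" using lsr_loc[OF fV xc l] by simp
  then show ?thesis using fV fx by blast
qed



lemma topspace_cantor[simp]: "topspace cantor_top = UNIV"
  by (simp add: cantor_top_def PiE_UNIV_domain)

lemma cyl_open: "openin cantor_top (cyl p)"
  unfolding cantor_top_def openin_product_topology_alt
proof (intro ballI)
  fix y assume y: "y \<in> cyl p"
  define U where "U = (\<lambda>i. if i < length p then {p!i} else (UNIV :: bool set))"
  have fin: "finite {i \<in> UNIV. U i \<noteq> topspace (discrete_topology UNIV)}"
    by (rule finite_subset[of _ "{..<length p}"]) (auto simp: U_def)
  have "y \<in> Pi\<^sub>E UNIV U" using y by (auto simp: PiE_UNIV_domain U_def cyl_iff)
  moreover have "Pi\<^sub>E UNIV U \<subseteq> cyl p"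
  proof
    fix z assume "z \<in> Pi\<^sub>E UNIV U"
    then have "\<forall>i. z i \<in> U i" by (auto simp: PiE_UNIV_domain Pi_iff)
    then have "\<forall>i<length p. z i \<in> {p!i}" unfolding U_def by (metis (full_types))
    then show "z \<in> cyl p" by (simp add: cyl_iff)
  qed
  ultimately show "\<exists>U. finite {i \<in> UNIV. U i \<noteq> topspace (discrete_topology UNIV)} \<and>
             (\<forall>i\<in>UNIV. openin (discrete_topology UNIV) (U i)) \<and> y \<in> Pi\<^sub>E UNIV U \<and> Pi\<^sub>E UNIV U \<subseteq> cyl p"
    using fin by auto
qed

lemma open_nbhd_cyl:
  assumes "openin cantor_top S" "x \<in> S" shows "\<exists>L. cyl (pref x L) \<subseteq> S"
proof -
  obtain U where U: "finite {i \<in> UNIV. U i \<noteq> topspace (discrete_topology (UNIV::bool set))}"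
    "x \<in> Pi\<^sub>E UNIV U" "Pi\<^sub>E UNIV U \<subseteq> S"
    using assms unfolding cantor_top_def openin_product_topology_alt by blast
  obtain L where L: "{i \<in> UNIV. U i \<noteq> topspace (discrete_topology (UNIV::bool set))} \<subseteq> {..<L}"
    using finite_nat_bounded[OF U(1)] by blast
  have "cyl (pref x L) \<subseteq> Pi\<^sub>E UNIV U"
  proof
    fix y assume y: "y \<in> cyl (pref x L)"
    have "y i \<in> U i" for i
    proof (cases "i < L")
      case True then have "y i = x i" using y by (simp add: cyl_iff)
      then show ?thesis using U(2) by (auto simp: PiE_UNIV_domain)
    next
      case False then have "U i = UNIV" using L by auto
      then show ?thesis by simp
    qed
    then show "y \<in> Pi\<^sub>E UNIV U" by (simp add: PiE_UNIV_domain)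
  qed
  then show ?thesis using U(3) by blast
qed

lemma stab_hom: "\<phi> \<in> StabN \<Longrightarrow> homeomorphic_map cantor_top cantor_top \<phi>"
  by (simp add: StabN_def)

lemma stab_bij: assumes "\<phi> \<in> StabN" shows "bij \<phi>"
proof -
  have "inj_on \<phi> (topspace cantor_top)" "\<phi> ` topspace cantor_top = topspace cantor_top"
    using homeomorphic_imp_injective_map homeomorphic_imp_surjective_map stab_hom[OF assms] by blast+
  then show ?thesis by (simp add: bij_def)
qed

lemma stab_open: assumes "\<phi> \<in> StabN" "openin cantor_top U" shows "openin cantor_top (\<phi> ` U)"
  using homeomorphic_map_openness[OF stab_hom[OF assms(1)], of U] assms(2) by simp

lemma stab_open_inv: assumes "\<phi> \<in> StabN" "openin cantor_top U" shows "openin cantor_top (inv \<phi> ` U)"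
proof -
  have "\<phi> ` (inv \<phi> ` U) = U" using stab_bij[OF assms(1)]
    by (simp add: image_comp bij_is_surj surj_f_inv_f)
  then show ?thesis
    using homeomorphic_map_openness[OF stab_hom[OF assms(1)], of "inv \<phi> ` U"] assms(2) by simp
qed

lemma stab_conj: assumes "\<phi> \<in> StabN" "g \<in> thompsonV" shows "inv \<phi> \<circ> g \<circ> \<phi> \<in> thompsonV"
proof -
  have "g \<in> (\<lambda>v. \<phi> \<circ> v \<circ> inv \<phi>) ` thompsonV" using assms by (simp add: StabN_def)
  then obtain v where v: "v \<in> thompsonV" "g = \<phi> \<circ> v \<circ> inv \<phi>" by blast
  have b: "bij \<phi>" by (rule stab_bij[OF assms(1)])
  have "inv \<phi> \<circ> g \<circ> \<phi> = (inv \<phi> \<circ> \<phi>) \<circ> v \<circ> (inv \<phi> \<circ> \<phi>)" using v by (simp add: o_assoc)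
  also have "\<dots> = v" using b by (simp add: bij_is_inj inj_iff[THEN iffD1])
  finally show ?thesis using v by simp
qed

lemma stab_conj': assumes "\<phi> \<in> StabN" "g \<in> thompsonV" shows "\<phi> \<circ> g \<circ> inv \<phi> \<in> thompsonV"
  using assms by (auto simp: StabN_def)

lemma stab_Q2: assumes "\<phi> \<in> StabN" "x \<in> Q2" shows "inv \<phi> x \<in> Q2"
proof -
  have "x \<in> \<phi> ` Q2" using assms by (simp add: StabN_def)
  then obtain y where "y \<in> Q2" "x = \<phi> y" by blast
  then show ?thesis using stab_bij[OF assms(1)] by (simp add: bij_is_inj)
qed

lemma zero_Q2: "zero_seq \<in> Q2"
  by (simp add: Q2_def zero_seq_def)



lemma loc_cyl_eq: "loc v (pref x L) p' \<Longrightarrow> y \<in> cyl (pref x L) \<Longrightarrow> v y \<in> cyl p'"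
  using loc_image by blast

lemma agree_near:
  assumes g: "g \<in> thompsonV" and h: "h \<in> thompsonV" and e: "g x = h x" and s: "lsr g x = lsr h x"
  shows "\<exists>L. \<forall>y\<in>cyl (pref x L). g y = h y"
proof -
  obtain L0 where L0: "\<forall>L\<ge>L0. \<exists>p'. loc g (pref x L) p'" using loc_pref[OF g] by blast
  obtain L1 where L1: "\<forall>L\<ge>L1. \<exists>p'. loc h (pref x L) p'" using loc_pref[OF h] by blast
  define L where "L = max L0 L1"
  have "L \<ge> L0" "L \<ge> L1" unfolding L_def by auto
  then obtain p' q' where p': "loc g (pref x L) p'" and q': "loc h (pref x L) q'" using L0 L1 by blast
  have "real L - real (length p') = real L - real (length q')"
    using lsr_loc[OF g in_cyl_pref p'] lsr_loc[OF h in_cyl_pref q'] s by simp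
  then have "length p' = length q'" by simp
  then have pq: "p' = q'" using loc_pref_image[OF p'] loc_pref_image[OF q'] e by metis
  have "\<forall>y\<in>cyl (pref x L). g y = h y"
  proof
    fix y assume "y \<in> cyl (pref x L)"
    then obtain t where "y = conc (pref x L) t" by (auto simp: cyl_def)
    then show "g y = h y" using p' q' pq by (simp add: loc_def)
  qed
  then show ?thesis by blast
qed

lemma same_lsr_if_agree:
  assumes g: "g \<in> thompsonV" and h: "h \<in> thompsonV" and a: "\<forall>y\<in>cyl (pref x L). g y = h y"
  shows "lsr g x = lsr h x"
proof -
  obtain L0 where L0: "\<forall>L\<ge>L0. \<exists>p'. loc g (pref x L) p'" using loc_pref[OF g] by blast
  obtain L1 where L1: "\<forall>L\<ge>L1. \<exists>p'. loc h (pref x L) p'" using loc_pref[OF h] by blast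
  define M where "M = max L (max L0 L1)"
  have "M \<ge> L0" "M \<ge> L1" unfolding M_def by auto
  then obtain p' q' where p': "loc g (pref x M) p'" and q': "loc h (pref x M) q'" using L0 L1 by blast
  have sub: "cyl (pref x M) \<subseteq> cyl (pref x L)" using pref_mono_cyl M_def by simp
  have "\<And>t. conc p' t = conc q' t"
  proof -
    fix t
    have "conc (pref x M) t \<in> cyl (pref x L)" using sub conc_in_cyl by blast
    then have "g (conc (pref x M) t) = h (conc (pref x M) t)" using a by blast
    then show "conc p' t = conc q' t" using p' q' by (simp add: loc_def)
  qed
  then have "p' = q'" by (rule conc_eq_all)
  then show ?thesis using lsr_loc[OF g in_cyl_pref p'] lsr_loc[OF h in_cyl_pref q'] by simp
qed

lemma conj_agree:
  assumes st: "\<phi> \<in> StabN" and a: "\<forall>y\<in>cyl (pref x L). g y = h y"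
  shows "\<exists>L'. \<forall>y\<in>cyl (pref (inv \<phi> x) L'). (inv \<phi> \<circ> g \<circ> \<phi>) y = (inv \<phi> \<circ> h \<circ> \<phi>) y"
proof -
  have b: "bij \<phi>" by (rule stab_bij[OF st])
  define W where "W = inv \<phi> ` cyl (pref x L)"
  have "openin cantor_top W" unfolding W_def by (rule stab_open_inv[OF st cyl_open])
  moreover have "inv \<phi> x \<in> W" unfolding W_def by simp
  ultimately obtain L' where L': "cyl (pref (inv \<phi> x) L') \<subseteq> W" using open_nbhd_cyl by blast
  have "\<forall>y\<in>cyl (pref (inv \<phi> x) L'). (inv \<phi> \<circ> g \<circ> \<phi>) y = (inv \<phi> \<circ> h \<circ> \<phi>) y"
  proof
    fix y assume "y \<in> cyl (pref (inv \<phi> x) L')"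
    then have "y \<in> W" using L' by blast
    then obtain w where w: "w \<in> cyl (pref x L)" "y = inv \<phi> w" unfolding W_def by blast
    have "\<phi> y = w" using w(2) b by (simp add: bij_is_surj surj_f_inv_f)
    then show "(inv \<phi> \<circ> g \<circ> \<phi>) y = (inv \<phi> \<circ> h \<circ> \<phi>) y" using a w(1) by simp
  qed
  then show ?thesis by blast
qed

lemma conj_comp:
  assumes "bij \<phi>"
  shows "inv \<phi> \<circ> (g \<circ> h) \<circ> \<phi> = (inv \<phi> \<circ> g \<circ> \<phi>) \<circ> (inv \<phi> \<circ> h \<circ> \<phi>)"
proof
  fix y show "(inv \<phi> \<circ> (g \<circ> h) \<circ> \<phi>) y = ((inv \<phi> \<circ> g \<circ> \<phi>) \<circ> (inv \<phi> \<circ> h \<circ> \<phi>)) y"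
    using assms by (simp add: bij_is_surj surj_f_inv_f)
qed

lemma conj_id: "bij \<phi> \<Longrightarrow> inv \<phi> \<circ> id \<circ> \<phi> = id"
  by (simp add: bij_is_inj inj_iff[THEN iffD1])

lemma conj_apply: "bij \<phi> \<Longrightarrow> (inv \<phi> \<circ> g \<circ> \<phi>) (inv \<phi> x) = inv \<phi> (g x)"
  by (simp add: bij_is_surj surj_f_inv_f)

lemma lambda_lemma:
  assumes st: "\<phi> \<in> StabN" and f: "f \<in> thompsonV" "f x = x" "lsr f x = 1"
  shows "\<forall>g\<in>thompsonV. g x = x \<longrightarrow> lsr g x = of_int i \<longrightarrow>
           lsr (inv \<phi> \<circ> g \<circ> \<phi>) (inv \<phi> x) = lsr (inv \<phi> \<circ> f \<circ> \<phi>) (inv \<phi> x) * of_int i"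
proof -
  have b: "bij \<phi>" by (rule stab_bij[OF st])
  define z where "z = inv \<phi> x"
  define lam where "lam = lsr (inv \<phi> \<circ> f \<circ> \<phi>) z"
  have cfV: "inv \<phi> \<circ> f \<circ> \<phi> \<in> thompsonV" by (rule stab_conj[OF st f(1)])
  have cfz: "(inv \<phi> \<circ> f \<circ> \<phi>) z = z" unfolding z_def using conj_apply[OF b] f(2) by metis
  have invf: "inv f x = x" using f(2) V_bij[OF f(1)] by (metis bij_inv_eq_iff)
  have invfV: "inv f \<in> thompsonV" by (rule V_inv[OF f(1)])
  have lsinvf: "lsr (inv f) x = -1" using lsr_inv[OF f(1), of x] f by simp
  have P: "\<forall>g\<in>thompsonV. g x = x \<longrightarrow> lsr g x = of_int i \<longrightarrow> lsr (inv \<phi> \<circ> g \<circ> \<phi>) z = lam * of_int i" for i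
  proof (induction i rule: int_induct[where k=0])
    case base
    show ?case
    proof (intro ballI impI)
      fix g assume g: "g \<in> thompsonV" "g x = x" "lsr g x = of_int 0"
      have "\<exists>L. \<forall>y\<in>cyl (pref x L). g y = id y"
        by (rule agree_near[OF g(1) V_id]) (use g lsr_id in auto)
      then obtain L where "\<forall>y\<in>cyl (pref x L). g y = id y" by blast
      then obtain L' where "\<forall>y\<in>cyl (pref z L'). (inv \<phi> \<circ> g \<circ> \<phi>) y = (inv \<phi> \<circ> id \<circ> \<phi>) y"
        using conj_agree[OF st] unfolding z_def by blast
      then have "lsr (inv \<phi> \<circ> g \<circ> \<phi>) z = lsr (inv \<phi> \<circ> id \<circ> \<phi>) z"
        by (rule same_lsr_if_agree[OF stab_conj[OF st g(1)] stab_conj[OF st V_id]])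
      then show "lsr (inv \<phi> \<circ> g \<circ> \<phi>) z = lam * of_int 0" using conj_id[OF b] lsr_id by simp
    qed
  next
    case (step1 i)
    show ?case
    proof (intro ballI impI)
      fix g assume g: "g \<in> thompsonV" "g x = x" "lsr g x = of_int (i + 1)"
      define g' where "g' = g \<circ> inv f"
      have g'V: "g' \<in> thompsonV" unfolding g'_def by (rule V_comp[OF invfV g(1)])
      have g'x: "g' x = x" unfolding g'_def using invf g(2) by simp
      have "lsr g' x = lsr g (inv f x) + lsr (inv f) x" unfolding g'_def by (rule lsr_comp[OF g(1) invfV])
      then have "lsr g' x = of_int i" using invf g(3) lsinvf by simp
      then have IH: "lsr (inv \<phi> \<circ> g' \<circ> \<phi>) z = lam * of_int i" using step1.IH g'V g'x by blast
      have "g = g' \<circ> f" unfolding g'_def using V_bij[OF f(1)] by (simp add: o_assoc bij_is_inj inj_iff[THEN iffD1])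
      then have "inv \<phi> \<circ> g \<circ> \<phi> = (inv \<phi> \<circ> g' \<circ> \<phi>) \<circ> (inv \<phi> \<circ> f \<circ> \<phi>)" using conj_comp[OF b] by metis
      then have "lsr (inv \<phi> \<circ> g \<circ> \<phi>) z = lsr (inv \<phi> \<circ> g' \<circ> \<phi>) ((inv \<phi> \<circ> f \<circ> \<phi>) z) + lsr (inv \<phi> \<circ> f \<circ> \<phi>) z"
        using lsr_comp[OF stab_conj[OF st g'V] cfV] by simp
      then show "lsr (inv \<phi> \<circ> g \<circ> \<phi>) z = lam * of_int (i + 1)" using IH cfz lam_def by (simp add: algebra_simps)
    qed
  next
    case (step2 i)
    show ?case
    proof (intro ballI impI)
      fix g assume g: "g \<in> thompsonV" "g x = x" "lsr g x = of_int (i - 1)"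
      define g' where "g' = g \<circ> f"
      have g'V: "g' \<in> thompsonV" unfolding g'_def by (rule V_comp[OF f(1) g(1)])
      have g'x: "g' x = x" unfolding g'_def using f(2) g(2) by simp
      have "lsr g' x = lsr g (f x) + lsr f x" unfolding g'_def by (rule lsr_comp[OF g(1) f(1)])
      then have "lsr g' x = of_int i" using f g(3) by simp
      then have IH: "lsr (inv \<phi> \<circ> g' \<circ> \<phi>) z = lam * of_int i" using step2.IH g'V g'x by blast
      have "inv \<phi> \<circ> g' \<circ> \<phi> = (inv \<phi> \<circ> g \<circ> \<phi>) \<circ> (inv \<phi> \<circ> f \<circ> \<phi>)" unfolding g'_def using conj_comp[OF b] by metis
      then have "lsr (inv \<phi> \<circ> g' \<circ> \<phi>) z = lsr (inv \<phi> \<circ> g \<circ> \<phi>) ((inv \<phi> \<circ> f \<circ> \<phi>) z) + lsr (inv \<phi> \<circ> f \<circ> \<phi>) z"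
        using lsr_comp[OF stab_conj[OF st g(1)] cfV] by simp
      then show "lsr (inv \<phi> \<circ> g \<circ> \<phi>) z = lam * of_int (i - 1)" using IH cfz lam_def by (simp add: algebra_simps)
    qed
  qed
  show ?thesis using P[of i] unfolding z_def lam_def by simp
qed



lemma dyn_contra:
  assumes st: "\<phi> \<in> StabN" and f: "f \<in> thompsonV" "f x = x" "lsr f x = 1"
    and hneg: "lsr (inv \<phi> \<circ> f \<circ> \<phi>) (inv \<phi> x) = -1"
  shows False
proof -
  have b: "bij \<phi>" by (rule stab_bij[OF st])
  define h where "h = inv \<phi> \<circ> f \<circ> \<phi>"
  define z where "z = inv \<phi> x"
  have hV: "h \<in> thompsonV" unfolding h_def by (rule stab_conj[OF st f(1)])
  have hz: "h z = z" unfolding h_def z_def using conj_apply[OF b] f(2) by metis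
  have phz: "\<phi> z = x" unfolding z_def using b by (simp add: bij_is_surj surj_f_inv_f)
  have lh: "lsr h z = -1" using hneg h_def z_def by simp
  obtain L0 where L0: "\<forall>L\<ge>L0. \<exists>p'. loc h (pref z L) p'" using loc_pref[OF hV] by blast
  have hstep: "h ` cyl (pref z L) \<subseteq> cyl (pref z (Suc L))" if hL: "L \<ge> L0" for L
  proof -
    obtain p' where p': "loc h (pref z L) p'" using L0 hL by blast
    have "real L - real (length p') = -1" using lsr_loc[OF hV in_cyl_pref p'] lh by simp
    then have "length p' = Suc L" by simp
    then have "p' = pref z (Suc L)" using loc_pref_image[OF p'] hz by simp
    then show ?thesis using loc_image[OF p'] by blast
  qed
  have hiter: "(h ^^ n) ` cyl (pref z L0) \<subseteq> cyl (pref z (L0 + n))" for n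
  proof (induction n)
    case 0 then show ?case by simp
  next
    case (Suc n)
    have "(h ^^ Suc n) ` cyl (pref z L0) = h ` ((h ^^ n) ` cyl (pref z L0))" by (simp add: image_comp)
    also have "\<dots> \<subseteq> h ` cyl (pref z (L0 + n))" using Suc.IH by (rule image_mono)
    also have "\<dots> \<subseteq> cyl (pref z (Suc (L0 + n)))" using hstep by simp
    finally show ?case by simp
  qed
  obtain M0 where M0: "\<forall>L\<ge>M0. \<exists>p'. loc f (pref x L) p'" using loc_pref[OF f(1)] by blast
  have fstep: "cyl (pref x M) \<subseteq> f ` cyl (pref x (Suc M))" if hM: "M \<ge> M0" for M
  proof -
    obtain p' where p': "loc f (pref x (Suc M)) p'" using M0 hM le_SucI by blast
    have "real (Suc M) - real (length p') = 1" using lsr_loc[OF f(1) in_cyl_pref p'] f(3) by simp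
    then have "length p' = M" by simp
    then have pp: "p' = pref x M" using loc_pref_image[OF p'] f(2) by simp
    show ?thesis
    proof
      fix y assume "y \<in> cyl (pref x M)"
      then obtain t where t: "y = conc (pref x M) t" by (auto simp: cyl_def)
      have "f (conc (pref x (Suc M)) t) = y" using p' pp t by (simp add: loc_def)
      then show "y \<in> f ` cyl (pref x (Suc M))" using conc_in_cyl by blast
    qed
  qed
  have comm: "(f ^^ n) \<circ> \<phi> = \<phi> \<circ> (h ^^ n)" for n
  proof (induction n)
    case 0 then show ?case by simp
  next
    case (Suc n)
    have fh: "f \<circ> \<phi> = \<phi> \<circ> h" unfolding h_def using b
      by (auto simp: fun_eq_iff bij_is_surj surj_f_inv_f)
    have "(f ^^ Suc n) \<circ> \<phi> = f \<circ> ((f ^^ n) \<circ> \<phi>)" by (simp add: o_assoc)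
    also have "\<dots> = (f \<circ> \<phi>) \<circ> (h ^^ n)" using Suc.IH by (metis comp_assoc)
    also have "\<dots> = \<phi> \<circ> (h \<circ> (h ^^ n))" using fh by (metis comp_assoc)
    also have "\<dots> = \<phi> \<circ> (h ^^ Suc n)" by simp
    finally show ?case .
  qed
  define A where "A = \<phi> ` cyl (pref z L0)"
  have "openin cantor_top A" unfolding A_def by (rule stab_open[OF st cyl_open])
  moreover have "x \<in> A" unfolding A_def using phz in_cyl_pref by blast
  ultimately obtain m where m: "cyl (pref x m) \<subseteq> A" using open_nbhd_cyl by blast
  define m' where "m' = max m M0"
  define C where "C = cyl (pref x m')"
  have CA: "C \<subseteq> A" unfolding C_def m'_def using m pref_mono_cyl[of m "max m M0" x] by auto
  have Cf: "C \<subseteq> f ` C"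
  proof -
    have "M0 \<le> m'" unfolding m'_def by simp
    then have "C \<subseteq> f ` cyl (pref x (Suc m'))" unfolding C_def by (rule fstep)
    also have "\<dots> \<subseteq> f ` C" unfolding C_def by (rule image_mono[OF pref_mono_cyl]) simp
    finally show ?thesis .
  qed
  have Cn: "C \<subseteq> (f ^^ n) ` A" for n
  proof (induction n)
    case 0 then show ?case using CA by simp
  next
    case (Suc n)
    have "C \<subseteq> f ` C" by (rule Cf)
    also have "\<dots> \<subseteq> f ` ((f ^^ n) ` A)" using Suc.IH by (rule image_mono)
    also have "\<dots> = (f ^^ Suc n) ` A" by (simp add: image_comp)
    finally show ?case .
  qed
  have An: "(f ^^ n) ` A \<subseteq> \<phi> ` cyl (pref z (L0 + n))" for n
  proof -
    have "(f ^^ n) ` A = ((f ^^ n) \<circ> \<phi>) ` cyl (pref z L0)" unfolding A_def by (simp add: image_comp)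
    also have "\<dots> = \<phi> ` ((h ^^ n) ` cyl (pref z L0))" using comm by (simp add: image_comp)
    also have "\<dots> \<subseteq> \<phi> ` cyl (pref z (L0 + n))" using hiter by (rule image_mono)
    finally show ?thesis .
  qed
  define y where "y = (\<lambda>k. if k = m' then \<not> x m' else x k)"
  have yC: "y \<in> C" unfolding C_def y_def by (simp add: cyl_iff)
  have "y m' \<noteq> x m'" unfolding y_def by simp
  then have yx: "y \<noteq> x" by blast
  have "inv \<phi> y \<in> cyl (pref z (L0 + n))" for n
  proof -
    have "y \<in> \<phi> ` cyl (pref z (L0 + n))" using yC Cn An by blast
    then obtain w where w: "w \<in> cyl (pref z (L0 + n))" "y = \<phi> w" by blast
    then show ?thesis using b by (simp add: bij_is_inj)
  qed
  then have "inv \<phi> y k = z k" for k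
  proof -
    assume a: "\<And>n. inv \<phi> y \<in> cyl (pref z (L0 + n))"
    have "k < length (pref z (L0 + Suc k))" by simp
    then show ?thesis using a[of "Suc k"] unfolding cyl_iff by simp
  qed
  then have "inv \<phi> y = z" by blast
  then have "\<phi> (inv \<phi> y) = x" using phz by simp
  then have "y = x" using b by (simp add: bij_is_surj surj_f_inv_f)
  then show False using yx by simp
qed

lemma key_fixed:
  assumes st: "\<phi> \<in> StabN" and x: "x \<in> Q2" and g: "g \<in> thompsonV" "g x = x"
  shows "lsr (inv \<phi> \<circ> g \<circ> \<phi>) (inv \<phi> x) = lsr g x"
proof -
  have b: "bij \<phi>" by (rule stab_bij[OF st])
  define z where "z = inv \<phi> x"
  have zQ: "z \<in> Q2" unfolding z_def by (rule stab_Q2[OF st x])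
  obtain f where f: "f \<in> thompsonV" "f x = x" "lsr f x = 1" using fix_elem[OF x] by blast
  obtain f2 where f2: "f2 \<in> thompsonV" "f2 z = z" "lsr f2 z = 1" using fix_elem[OF zQ] by blast
  define lam where "lam = lsr (inv \<phi> \<circ> f \<circ> \<phi>) z"
  have H: "\<And>g i. g \<in> thompsonV \<Longrightarrow> g x = x \<Longrightarrow> lsr g x = of_int i \<Longrightarrow>
             lsr (inv \<phi> \<circ> g \<circ> \<phi>) z = lam * of_int i"
    using lambda_lemma[OF st f] unfolding z_def lam_def by blast
  define g2 where "g2 = \<phi> \<circ> f2 \<circ> inv \<phi>"
  have g2V: "g2 \<in> thompsonV" unfolding g2_def by (rule stab_conj'[OF st f2(1)])
  have phz: "\<phi> z = x" unfolding z_def using b by (simp add: bij_is_surj surj_f_inv_f)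
  have g2x: "g2 x = x" unfolding g2_def using f2(2) phz z_def by simp
  have cg2: "inv \<phi> \<circ> g2 \<circ> \<phi> = f2" unfolding g2_def using b
    by (auto simp: fun_eq_iff bij_is_inj)
  obtain mu where mu: "lsr g2 x = of_int mu" using lsr_int[OF g2V] by (auto elim: Ints_cases)
  have "1 = lam * of_int mu" using H[OF g2V g2x mu] cg2 f2(3) by simp
  moreover obtain l where l: "lam = of_int l"
    using lsr_int[OF stab_conj[OF st f(1)]] lam_def by (auto elim: Ints_cases)
  ultimately have "l * mu = 1" by (metis of_int_eq_1_iff of_int_mult)
  then have "l = 1 \<or> l = -1" using zmult_eq_1_iff by blast
  moreover have "l \<noteq> -1"
  proof
    assume "l = -1"
    then have "lsr (inv \<phi> \<circ> f \<circ> \<phi>) (inv \<phi> x) = -1" using l lam_def z_def by simp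
    then show False using dyn_contra[OF st f] by blast
  qed
  ultimately have lam1: "lam = 1" using l by simp
  obtain i where i: "lsr g x = of_int i" using lsr_int[OF g(1)] by (auto elim: Ints_cases)
  show ?thesis using H[OF g i] lam1 i z_def by simp
qed



lemma cocycle:
  assumes st: "\<phi> \<in> StabN" and g: "g \<in> thompsonV" and h: "h \<in> thompsonV"
  shows "lsr (inv \<phi> \<circ> (g \<circ> h) \<circ> \<phi>) (inv \<phi> x) - lsr (g \<circ> h) x =
    (lsr (inv \<phi> \<circ> g \<circ> \<phi>) (inv \<phi> (h x)) - lsr g (h x)) + (lsr (inv \<phi> \<circ> h \<circ> \<phi>) (inv \<phi> x) - lsr h x)"
proof -
  have b: "bij \<phi>" by (rule stab_bij[OF st])
  have "lsr (inv \<phi> \<circ> (g \<circ> h) \<circ> \<phi>) (inv \<phi> x) =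
        lsr (inv \<phi> \<circ> g \<circ> \<phi>) ((inv \<phi> \<circ> h \<circ> \<phi>) (inv \<phi> x)) + lsr (inv \<phi> \<circ> h \<circ> \<phi>) (inv \<phi> x)"
    using conj_comp[OF b, of g h] lsr_comp[OF stab_conj[OF st g] stab_conj[OF st h]] by simp
  moreover have "(inv \<phi> \<circ> h \<circ> \<phi>) (inv \<phi> x) = inv \<phi> (h x)" by (rule conj_apply[OF b])
  ultimately show ?thesis using lsr_comp[OF g h, of x] by simp
qed

lemma part1:
  assumes st: "\<psi> \<in> StabN" and x: "x \<in> Q2" and v: "v \<in> thompsonV" and w: "w \<in> thompsonV"
    and e: "v x = w x"
  shows "lsr (inv \<psi> \<circ> v \<circ> \<psi>) (inv \<psi> x) - lsr v x = lsr (inv \<psi> \<circ> w \<circ> \<psi>) (inv \<psi> x) - lsr w x"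
proof -
  have b: "bij \<psi>" by (rule stab_bij[OF st])
  have wi: "inv w \<circ> w = id" using V_bij[OF w] by (simp add: bij_is_inj inj_iff[THEN iffD1])
  have iwV: "inv w \<in> thompsonV" by (rule V_inv[OF w])
  have gx: "(inv w \<circ> v) x = x" using e wi by (metis comp_apply id_apply)
  have "lsr (inv \<psi> \<circ> (inv w \<circ> v) \<circ> \<psi>) (inv \<psi> x) = lsr (inv w \<circ> v) x"
    by (rule key_fixed[OF st x V_comp[OF v iwV] gx])
  then have A: "0 = (lsr (inv \<psi> \<circ> inv w \<circ> \<psi>) (inv \<psi> (v x)) - lsr (inv w) (v x)) +
       (lsr (inv \<psi> \<circ> v \<circ> \<psi>) (inv \<psi> x) - lsr v x)"
    using cocycle[OF st iwV v, of x] by simp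
  have "lsr (inv \<psi> \<circ> (inv w \<circ> w) \<circ> \<psi>) (inv \<psi> x) - lsr (inv w \<circ> w) x = 0"
    using wi conj_id[OF b] lsr_id by simp
  then have B: "0 = (lsr (inv \<psi> \<circ> inv w \<circ> \<psi>) (inv \<psi> (w x)) - lsr (inv w) (w x)) +
       (lsr (inv \<psi> \<circ> w \<circ> \<psi>) (inv \<psi> x) - lsr w x)"
    using cocycle[OF st iwV w, of x] by simp
  show ?thesis using A B e by simp
qed

lemma gamma_eq:
  assumes st: "\<psi> \<in> StabN" and y: "y \<in> Q2" and u: "u \<in> thompsonV" "u zero_seq = y"
  shows "gamma \<psi> y = lsr (inv \<psi> \<circ> u \<circ> \<psi>) (inv \<psi> zero_seq) - lsr u zero_seq"
proof -
  define u0 where "u0 = (SOME u. u \<in> thompsonV \<and> u zero_seq = y)"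
  have "\<exists>u. u \<in> thompsonV \<and> u zero_seq = y" using V_trans_Q2[OF y] by blast
  then have u0: "u0 \<in> thompsonV" "u0 zero_seq = y" unfolding u0_def by (metis (mono_tags, lifting) someI_ex)+
  have "gamma \<psi> y = lsr (inv \<psi> \<circ> u0 \<circ> \<psi>) (inv \<psi> zero_seq) - lsr u0 zero_seq"
    unfolding gamma_def Let_def u0_def by simp
  also have "\<dots> = lsr (inv \<psi> \<circ> u \<circ> \<psi>) (inv \<psi> zero_seq) - lsr u zero_seq"
    by (rule part1[OF st zero_Q2 u0(1) u(1)]) (simp add: u0 u)
  finally show ?thesis .
qed

lemma gamma_int:
  assumes st: "\<psi> \<in> StabN" and y: "y \<in> Q2" shows "gamma \<psi> y \<in> \<int>"
proof -
  obtain u where u: "u \<in> thompsonV" "u zero_seq = y" using V_trans_Q2[OF y] by blast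
  show ?thesis using gamma_eq[OF st y u] lsr_int[OF u(1)] lsr_int[OF stab_conj[OF st u(1)]] by simp
qed

lemma part3:
  assumes st: "\<psi> \<in> StabN" and x: "x \<in> Q2" and v: "v \<in> thompsonV"
  shows "gamma \<psi> (v x) - gamma \<psi> x = lsr (inv \<psi> \<circ> v \<circ> \<psi>) (inv \<psi> x) - lsr v x"
proof -
  obtain u where u: "u \<in> thompsonV" "u zero_seq = x" using V_trans_Q2[OF x] by blast
  have vuV: "v \<circ> u \<in> thompsonV" by (rule V_comp[OF u(1) v])
  have g1: "gamma \<psi> (v x) = lsr (inv \<psi> \<circ> (v \<circ> u) \<circ> \<psi>) (inv \<psi> zero_seq) - lsr (v \<circ> u) zero_seq"
    by (rule gamma_eq[OF st V_Q2[OF v x] vuV]) (simp add: u)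
  have g2: "gamma \<psi> x = lsr (inv \<psi> \<circ> u \<circ> \<psi>) (inv \<psi> zero_seq) - lsr u zero_seq"
    by (rule gamma_eq[OF st x u])
  show ?thesis using g1 g2 cocycle[OF st v u(1), of zero_seq] u(2) by simp
qed

lemma part4:
  assumes st1: "\<phi> \<in> StabN" and st2: "\<psi> \<in> StabN" and y: "y \<in> Q2"
  shows "gamma (\<phi> \<circ> \<psi>) y = gamma \<phi> y + gamma \<psi> (inv \<phi> y) - gamma \<psi> (inv \<phi> zero_seq)"
proof -
  have b1: "bij \<phi>" by (rule stab_bij[OF st1])
  have b2: "bij \<psi>" by (rule stab_bij[OF st2])
  define u where "u = (SOME u. u \<in> thompsonV \<and> u zero_seq = y)"
  have "\<exists>u. u \<in> thompsonV \<and> u zero_seq = y" using V_trans_Q2[OF y] by blast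
  then have u: "u \<in> thompsonV" "u zero_seq = y" unfolding u_def by (metis (mono_tags, lifting) someI_ex)+
  have G: "gamma (\<phi> \<circ> \<psi>) y = lsr (inv (\<phi> \<circ> \<psi>) \<circ> u \<circ> (\<phi> \<circ> \<psi>)) (inv (\<phi> \<circ> \<psi>) zero_seq) - lsr u zero_seq"
    unfolding gamma_def Let_def u_def by simp
  have ic: "inv (\<phi> \<circ> \<psi>) = inv \<psi> \<circ> inv \<phi>" by (rule o_inv_distrib[OF b1 b2])
  define u' where "u' = inv \<phi> \<circ> u \<circ> \<phi>"
  define z where "z = inv \<phi> zero_seq"
  have u'V: "u' \<in> thompsonV" unfolding u'_def by (rule stab_conj[OF st1 u(1)])
  have zQ: "z \<in> Q2" unfolding z_def by (rule stab_Q2[OF st1 zero_Q2])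
  have e1: "inv (\<phi> \<circ> \<psi>) \<circ> u \<circ> (\<phi> \<circ> \<psi>) = inv \<psi> \<circ> u' \<circ> \<psi>"
    unfolding ic u'_def by (simp add: o_assoc)
  have e2: "inv (\<phi> \<circ> \<psi>) zero_seq = inv \<psi> z" unfolding ic z_def by simp
  have u'z: "u' z = inv \<phi> y" unfolding u'_def z_def using conj_apply[OF b1, of u zero_seq] u(2) by simp
  have P3: "gamma \<psi> (u' z) - gamma \<psi> z = lsr (inv \<psi> \<circ> u' \<circ> \<psi>) (inv \<psi> z) - lsr u' z"
    by (rule part3[OF st2 zQ u'V])
  have Gphi: "gamma \<phi> y = lsr u' z - lsr u zero_seq"
    using gamma_eq[OF st1 y u] unfolding u'_def z_def .
  have G2: "gamma (\<phi> \<circ> \<psi>) y = lsr (inv \<psi> \<circ> u' \<circ> \<psi>) (inv \<psi> z) - lsr u zero_seq"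
    using G unfolding e1 e2 .
  have P3': "gamma \<psi> (inv \<phi> y) - gamma \<psi> (inv \<phi> zero_seq) = lsr (inv \<psi> \<circ> u' \<circ> \<psi>) (inv \<psi> z) - lsr u' z"
    using P3 unfolding u'z by (simp only: z_def)
  show ?thesis using G2 P3' Gphi by linarith
qed

theorem mainTheorem14:
  fixes \<phi> \<psi> :: "cantor \<Rightarrow> cantor" and x :: cantor and v w :: "cantor \<Rightarrow> cantor"
  assumes "\<phi> \<in> StabN" and "\<psi> \<in> StabN" and "x \<in> Q2"
    and "v \<in> thompsonV" and "w \<in> thompsonV"
  shows
    "(v x = w x \<longrightarrow>
        log 2 (slope (inv \<psi> \<circ> v \<circ> \<psi>) (inv \<psi> x)) - log 2 (slope v x) =
        log 2 (slope (inv \<psi> \<circ> w \<circ> \<psi>) (inv \<psi> x)) - log 2 (slope w x))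
   \<and> (\<forall>y\<in>Q2.
        (\<forall>u1\<in>thompsonV. \<forall>u2\<in>thompsonV. u1 zero_seq = y \<longrightarrow> u2 zero_seq = y \<longrightarrow>
           log 2 (slope (inv \<psi> \<circ> u1 \<circ> \<psi>) (inv \<psi> zero_seq)) - log 2 (slope u1 zero_seq) =
           log 2 (slope (inv \<psi> \<circ> u2 \<circ> \<psi>) (inv \<psi> zero_seq)) - log 2 (slope u2 zero_seq))
      \<and> (\<forall>u\<in>thompsonV. u zero_seq = y \<longrightarrow>
           gamma \<psi> y = log 2 (slope (inv \<psi> \<circ> u \<circ> \<psi>) (inv \<psi> zero_seq)) - log 2 (slope u zero_seq))
      \<and> gamma \<psi> y \<in> \<int>)
   \<and> gamma \<psi> (v x) - gamma \<psi> x =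
        log 2 (slope (inv \<psi> \<circ> v \<circ> \<psi>) (inv \<psi> x)) - log 2 (slope v x)
   \<and> (\<forall>y\<in>Q2. gamma (\<phi> \<circ> \<psi>) y = gamma \<phi> y + gamma \<psi> (inv \<phi> y) - gamma \<psi> (inv \<phi> zero_seq))"
proof (intro conjI impI ballI)
  assume e: "v x = w x"
  show "log 2 (slope (inv \<psi> \<circ> v \<circ> \<psi>) (inv \<psi> x)) - log 2 (slope v x) =
        log 2 (slope (inv \<psi> \<circ> w \<circ> \<psi>) (inv \<psi> x)) - log 2 (slope w x)"
    by (rule part1[OF assms(2,3,4,5) e])
next
  fix y u1 u2 assume h: "y \<in> Q2" "u1 \<in> thompsonV" "u2 \<in> thompsonV" "u1 zero_seq = y" "u2 zero_seq = y"
  have e: "u1 zero_seq = u2 zero_seq" using h(4,5) by (rule trans[OF _ sym])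
  show "log 2 (slope (inv \<psi> \<circ> u1 \<circ> \<psi>) (inv \<psi> zero_seq)) - log 2 (slope u1 zero_seq) =
           log 2 (slope (inv \<psi> \<circ> u2 \<circ> \<psi>) (inv \<psi> zero_seq)) - log 2 (slope u2 zero_seq)"
    by (rule part1[OF assms(2) zero_Q2 h(2,3) e])
next
  fix y u assume h: "y \<in> Q2" "u \<in> thompsonV" "u zero_seq = y"
  show "gamma \<psi> y = log 2 (slope (inv \<psi> \<circ> u \<circ> \<psi>) (inv \<psi> zero_seq)) - log 2 (slope u zero_seq)"
    by (rule gamma_eq[OF assms(2) h])
next
  fix y assume h: "y \<in> Q2"
  show "gamma \<psi> y \<in> \<int>" by (rule gamma_int[OF assms(2) h])
next
  show "gamma \<psi> (v x) - gamma \<psi> x = log 2 (slope (inv \<psi> \<circ> v \<circ> \<psi>) (inv \<psi> x)) - log 2 (slope v x)"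
    by (rule part3[OF assms(2,3,4)])
next
  fix y assume h: "y \<in> Q2"
  show "gamma (\<phi> \<circ> \<psi>) y = gamma \<phi> y + gamma \<psi> (inv \<phi> y) - gamma \<psi> (inv \<phi> zero_seq)"
    by (rule part4[OF assms(1,2) h])
qed

end
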